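(* Let $D\ge1$, let $\sigma_I,\sigma_E\in C^2(\mathbb{R}^D)$ and set $\Sigma:=\sigma_I-\sigma_E$. Assume that $\nabla^2_\Xi\Sigma(\Xi)>0$ (positive definite) for all $\Xi$ and that $\nabla_\Xi\Sigma:\mathbb{R}^D\to\mathbb{R}^D$ is onto. Let $G\in C^2(\mathbb{R}^D)$ be a function with $\nabla_\tau G(\tau)=-(\nabla_\Xi\Sigma)^{-1}(-\tau)$ for all $\tau\in\mathbb{R}^D$, and define $$\Psi(\Xi,\tau):=\sigma_I(\Xi)+\Xi\cdot\tau+G(\tau),\qquad (\Xi,\tau)\in\mathbb{R}^D\times\mathbb{R}^D .$$ Assume moreover that there are constants $\gamma_I>\gamma_v>0$ such that, for all $\Xi\in\mathbb{R}^D$, $$\nabla^2_\Xi\sigma_I(\Xi)\ \ge\ \gamma_I\,\mathbb{I}_D\ >\ \gamma_v\,\mathbb{I}_D\ \ge\ \nabla^2_\Xi\Sigma(\Xi)\ >\ 0$$ in the sense of symmetric matrices. Then there is $\delta>0$ such that $\nabla^2_{(\Xi,\tau)}\Psi(\Xi,\tau)\ge\delta\,\mathbb{I}_{2D}$ for all $(\Xi,\tau)\in\mathbb{R}^D\times\mathbb{R}^D$.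
   Context: Under the stated hypotheses $\nabla_\Xi\Sigma$ is a bijection of $\mathbb{R}^D$ with $C^1$ inverse $(\nabla_\Xi\Sigma)^{-1}$, whose Jacobian is symmetric, so a function $G$ with the stated gradient exists (unique up to an additive constant). $\mathbb{I}_k$ denotes the $k\times k$ identity matrix; inequalities between symmetric matrices are in the sense of quadratic forms. In the paper's application $D=19$ (three space dimensions) or $D=5$ (two space dimensions). *)

theory Defs
  imports "HOL-Analysis.Analysis"
begin

definition grad :: "('a::euclidean_space \<Rightarrow> real) \<Rightarrow> 'a \<Rightarrow> 'a" where
  "grad f x = (\<Sum>b\<in>Basis. frechet_derivative f (at x) b *\<^sub>R b)"

text \<open>Hessian at x, viewed as the linear map h \<mapsto> D(grad f)(x) h
  (i.e. multiplication by the Hessian matrix).\<close>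
definition hess :: "('a::euclidean_space \<Rightarrow> real) \<Rightarrow> 'a \<Rightarrow> 'a \<Rightarrow> 'a" where
  "hess f x = frechet_derivative (grad f) (at x)"

definition C2 :: "('a::euclidean_space \<Rightarrow> real) \<Rightarrow> bool" where
  "C2 f \<longleftrightarrow> (\<forall>x. f differentiable (at x)) \<and> (\<forall>x. grad f differentiable (at x)) \<and>
     (\<forall>u v. continuous_on UNIV (\<lambda>x. hess f x u \<bullet> v))"

definition ge_scalar :: "('a::real_inner \<Rightarrow> 'a) \<Rightarrow> real \<Rightarrow> bool" where
  "ge_scalar H c \<longleftrightarrow> (\<forall>v. c * (v \<bullet> v) \<le> v \<bullet> H v)"

definition le_scalar :: "('a::real_inner \<Rightarrow> 'a) \<Rightarrow> real \<Rightarrow> bool" where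
  "le_scalar H c \<longleftrightarrow> (\<forall>v. v \<bullet> H v \<le> c * (v \<bullet> v))"

definition pos_def :: "('a::real_inner \<Rightarrow> 'a) \<Rightarrow> bool" where
  "pos_def H \<longleftrightarrow> (\<forall>v. v \<noteq> 0 \<longrightarrow> 0 < v \<bullet> H v)"

end

theory Submission
  imports Defs
begin
lemma grad_inner:
  fixes f :: "'a::euclidean_space \<Rightarrow> real"
  assumes "f differentiable (at x)"
  shows "grad f x \<bullet> h = frechet_derivative f (at x) h"
proof -
  let ?f' = "frechet_derivative f (at x)"
  have lin: "linear ?f'" using assms frechet_derivative_works has_derivative_linear by blast
  have "grad f x \<bullet> h = (\<Sum>b\<in>Basis. ?f' b * (b \<bullet> h))"
    unfolding grad_def by (simp add: inner_sum_left)
  also have "\<dots> = ?f' (\<Sum>b\<in>Basis. (h \<bullet> b) *\<^sub>R b)"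
    by (simp add: linear_sum[OF lin] linear_cmul[OF lin] inner_commute mult.commute)
  also have "\<dots> = ?f' h" by (simp add: euclidean_representation)
  finally show ?thesis .
qed

lemma grad_has_derivative:
  fixes f :: "'a::euclidean_space \<Rightarrow> real"
  assumes "f differentiable (at x)"
  shows "(f has_derivative (\<lambda>h. grad f x \<bullet> h)) (at x)"
  using assms frechet_derivative_works grad_inner by (metis (no_types, lifting) ext)

lemma grad_eqI:
  fixes f :: "'a::euclidean_space \<Rightarrow> real"
  assumes "(f has_derivative (\<lambda>h. g \<bullet> h)) (at x)"
  shows "grad f x = g"
proof -
  have d: "f differentiable (at x)" using assms differentiable_def by blast
  have "\<And>h. grad f x \<bullet> h = g \<bullet> h"
    using grad_inner[OF d] frechet_derivative_at[OF assms] by metis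
  then have "(grad f x - g) \<bullet> (grad f x - g) = 0" by (simp add: inner_diff_left)
  then show ?thesis by simp
qed

lemma hess_has_derivative:
  fixes f :: "'a::euclidean_space \<Rightarrow> real"
  assumes "grad f differentiable (at x)"
  shows "(grad f has_derivative hess f x) (at x)"
  using assms frechet_derivative_works hess_def by metis

lemma hess_linear:
  fixes f :: "'a::euclidean_space \<Rightarrow> real"
  assumes "grad f differentiable (at x)"
  shows "linear (hess f x)"
  using hess_has_derivative[OF assms] has_derivative_linear by blast


lemma line_deriv1:
  fixes f :: "'a::euclidean_space \<Rightarrow> real"
  assumes "\<forall>x. f differentiable (at x)"
  shows "((\<lambda>s. f (a + s *\<^sub>R u)) has_real_derivative (grad f (a + s *\<^sub>R u) \<bullet> u)) (at s)"
proof -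
  have p: "((\<lambda>s. a + s *\<^sub>R u) has_derivative (\<lambda>d. d *\<^sub>R u)) (at s)"
    by (auto intro!: derivative_eq_intros)
  have "((\<lambda>s. f (a + s *\<^sub>R u)) has_derivative (\<lambda>d. grad f (a + s *\<^sub>R u) \<bullet> (d *\<^sub>R u))) (at s)"
    by (rule has_derivative_compose[OF p grad_has_derivative]) (use assms in auto)
  moreover have "(\<lambda>d. d * (grad f (a + s *\<^sub>R u) \<bullet> u)) = (*) (grad f (a + s *\<^sub>R u) \<bullet> u)"
    by (auto simp: mult.commute)
  ultimately show ?thesis unfolding has_field_derivative_def
    by simp
qed

lemma line_deriv2:
  fixes f :: "'a::euclidean_space \<Rightarrow> real"
  assumes "\<forall>x. grad f differentiable (at x)"
  shows "((\<lambda>r. grad f (a + r *\<^sub>R v) \<bullet> u) has_real_derivative (hess f (a + r *\<^sub>R v) v \<bullet> u)) (at r)"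
proof -
  have p: "((\<lambda>s. a + s *\<^sub>R v) has_derivative (\<lambda>d. d *\<^sub>R v)) (at r)"
    by (auto intro!: derivative_eq_intros)
  have "((\<lambda>s. grad f (a + s *\<^sub>R v)) has_derivative (\<lambda>d. hess f (a + r *\<^sub>R v) (d *\<^sub>R v))) (at r)"
    by (rule has_derivative_compose[OF p hess_has_derivative]) (use assms in auto)
  then have "((\<lambda>s. grad f (a + s *\<^sub>R v) \<bullet> u) has_derivative (\<lambda>d. hess f (a + r *\<^sub>R v) (d *\<^sub>R v) \<bullet> u)) (at r)"
    by (auto intro!: derivative_eq_intros)
  moreover have "(\<lambda>d. hess f (a + r *\<^sub>R v) (d *\<^sub>R v) \<bullet> u) = (\<lambda>d. (hess f (a + r *\<^sub>R v) v \<bullet> u) * d)"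
    using linear_cmul[OF hess_linear, of f "a + r *\<^sub>R v"] assms by (auto simp: mult.commute)
  ultimately show ?thesis unfolding has_field_derivative_def by simp
qed

lemma schwarz_step:
  fixes f :: "'a::euclidean_space \<Rightarrow> real"
  assumes d1: "\<forall>x. f differentiable (at x)" and d2: "\<forall>x. grad f differentiable (at x)"
    and t: "0 < t"
  shows "\<exists>p. norm (p - x) \<le> t * (norm u + norm v) \<and>
     f (x + t *\<^sub>R u + t *\<^sub>R v) - f (x + t *\<^sub>R u) - f (x + t *\<^sub>R v) + f x = t * t * (hess f p v \<bullet> u)"
proof -
  define \<phi> where "\<phi> s = f ((x + t *\<^sub>R v) + s *\<^sub>R u) - f (x + s *\<^sub>R u)" for s
  have dphi: "\<And>s. (\<phi> has_real_derivative (grad f ((x + t *\<^sub>R v) + s *\<^sub>R u) \<bullet> u - grad f (x + s *\<^sub>R u) \<bullet> u)) (at s)"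
    unfolding \<phi>_def by (intro derivative_intros line_deriv1 d1)
  obtain s where s: "0 < s" "s < t"
     and e1: "\<phi> t - \<phi> 0 = (t - 0) * (grad f ((x + t *\<^sub>R v) + s *\<^sub>R u) \<bullet> u - grad f (x + s *\<^sub>R u) \<bullet> u)"
    using MVT2[OF t dphi] by metis
  define \<psi> where "\<psi> r = grad f ((x + s *\<^sub>R u) + r *\<^sub>R v) \<bullet> u" for r
  have dpsi: "\<And>r. (\<psi> has_real_derivative (hess f ((x + s *\<^sub>R u) + r *\<^sub>R v) v \<bullet> u)) (at r)"
    unfolding \<psi>_def by (intro line_deriv2 d2)
  obtain r where r: "0 < r" "r < t"
     and e2: "\<psi> t - \<psi> 0 = (t - 0) * (hess f ((x + s *\<^sub>R u) + r *\<^sub>R v) v \<bullet> u)"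
    using MVT2[OF t dpsi] by metis
  have "norm ((x + s *\<^sub>R u + r *\<^sub>R v) - x) \<le> norm (s *\<^sub>R u) + norm (r *\<^sub>R v)"
    by (metis add_diff_cancel_left' add.assoc norm_triangle_ineq)
  also have "\<dots> \<le> t * norm u + t * norm v"
    using s r by (intro add_mono) (auto intro!: mult_right_mono)
  finally have n: "norm ((x + s *\<^sub>R u + r *\<^sub>R v) - x) \<le> t * (norm u + norm v)"
    by (simp add: distrib_left)
  have "f (x + t *\<^sub>R u + t *\<^sub>R v) - f (x + t *\<^sub>R u) - f (x + t *\<^sub>R v) + f x = \<phi> t - \<phi> 0"
    unfolding \<phi>_def by (simp add: add_ac)
  also have "\<dots> = t * (\<psi> t - \<psi> 0)"
    using e1 unfolding \<psi>_def by (simp add: add_ac)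
  also have "\<dots> = t * t * (hess f ((x + s *\<^sub>R u) + r *\<^sub>R v) v \<bullet> u)"
    using e2 by simp
  finally show ?thesis using n by blast
qed


lemma hess_sym:
  fixes f :: "'a::euclidean_space \<Rightarrow> real"
  assumes "C2 f"
  shows "hess f x v \<bullet> u = hess f x u \<bullet> v"
proof (rule ccontr)
  assume ne: "hess f x v \<bullet> u \<noteq> hess f x u \<bullet> v"
  have d1: "\<forall>x. f differentiable (at x)" and d2: "\<forall>x. grad f differentiable (at x)"
    and c1: "continuous_on UNIV (\<lambda>x. hess f x v \<bullet> u)" and c2: "continuous_on UNIV (\<lambda>x. hess f x u \<bullet> v)"
    using assms unfolding C2_def by auto
  define e where "e = \<bar>hess f x v \<bullet> u - hess f x u \<bullet> v\<bar> / 2"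
  have e: "e > 0" using ne unfolding e_def by auto
  obtain da where da: "da > 0" "\<And>y. dist y x < da \<Longrightarrow> dist (hess f y v \<bullet> u) (hess f x v \<bullet> u) < e"
    using c1 e unfolding continuous_on_iff by (metis UNIV_I)
  obtain db where db: "db > 0" "\<And>y. dist y x < db \<Longrightarrow> dist (hess f y u \<bullet> v) (hess f x u \<bullet> v) < e"
    using c2 e unfolding continuous_on_iff by (metis UNIV_I)
  define t where "t = min da db / (2 * (norm u + norm v + 1))"
  have npos: "norm u + norm v + 1 > 0" by (simp add: add_nonneg_pos)
  have t: "t > 0" using da db npos unfolding t_def by auto
  have tb: "t * (norm u + norm v) < min da db"
  proof -
    have "t * (norm u + norm v) \<le> t * (norm u + norm v + 1)" using t by simp
    also have "\<dots> = min da db / 2" unfolding t_def using npos by (simp add: field_simps)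
    also have "\<dots> < min da db" using da(1) db(1) by (simp add: min_def)
    finally show ?thesis .
  qed
  obtain p where p: "norm (p - x) \<le> t * (norm u + norm v)"
    "f (x + t *\<^sub>R u + t *\<^sub>R v) - f (x + t *\<^sub>R u) - f (x + t *\<^sub>R v) + f x = t * t * (hess f p v \<bullet> u)"
    using schwarz_step[OF d1 d2 t] by blast
  obtain q where q: "norm (q - x) \<le> t * (norm v + norm u)"
    "f (x + t *\<^sub>R v + t *\<^sub>R u) - f (x + t *\<^sub>R v) - f (x + t *\<^sub>R u) + f x = t * t * (hess f q u \<bullet> v)"
    using schwarz_step[OF d1 d2 t] by blast
  have "t * t * (hess f p v \<bullet> u) = t * t * (hess f q u \<bullet> v)"
  proof -
    have "x + t *\<^sub>R v + t *\<^sub>R u = x + t *\<^sub>R u + t *\<^sub>R v" by (simp add: add_ac)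
    then show ?thesis using p(2) q(2) by (metis (no_types, lifting) diff_diff_eq add.commute)
  qed
  then have eq: "hess f p v \<bullet> u = hess f q u \<bullet> v" using t by simp
  have "dist p x < da" using p(1) tb by (simp add: dist_norm)
  then have A: "\<bar>hess f p v \<bullet> u - hess f x v \<bullet> u\<bar> < e" using da(2) by (simp add: dist_real_def)
  have "dist q x < db" using q(1) tb by (simp add: dist_norm add.commute)
  then have B: "\<bar>hess f q u \<bullet> v - hess f x u \<bullet> v\<bar> < e" using db(2) by (simp add: dist_real_def)
  have aux: "\<And>P A Q B::real. \<bar>P - A\<bar> < \<bar>A - B\<bar> / 2 \<Longrightarrow> \<bar>Q - B\<bar> < \<bar>A - B\<bar> / 2 \<Longrightarrow> P = Q \<Longrightarrow> False"
    by (auto simp: abs_if split: if_split_asm)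
  from aux[OF A[unfolded e_def] B[unfolded e_def] eq] show False .
qed


lemma inv_bound:
  fixes H B :: "'a::euclidean_space \<Rightarrow> 'a" and c :: real
  assumes lH: "linear H" and lB: "linear B"
    and symB: "\<And>x y. B x \<bullet> y = B y \<bullet> x"
    and HB: "\<And>k. H (B k) = k"
    and psd: "\<And>v. 0 \<le> v \<bullet> H v"
    and le: "\<And>v. v \<bullet> H v \<le> c * (v \<bullet> v)"
    and c: "0 < c"
  shows "(1 / c) * (w \<bullet> w) \<le> w \<bullet> B w"
proof -
  have "inj B" by (metis HB injI)
  then have "surj B" using linear_injective_imp_surjective[OF lB] by blast
  then obtain z where z: "B z = w" by (metis surjE)
  define s where "s = 1 / c"
  have psdB: "0 \<le> x \<bullet> B x" for x
    using psd[of "B x"] HB[of x] by (simp add: inner_commute)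
  have zb: "z \<bullet> B z \<le> c * (w \<bullet> w)"
    using le[of "B z"] HB[of z] z by (simp add: inner_commute)
  have wz: "w \<bullet> B z = w \<bullet> w" using z by simp
  have zw: "z \<bullet> B w = w \<bullet> w" using symB[of w z] z by (simp add: inner_commute)
  have "0 \<le> (w - s *\<^sub>R z) \<bullet> B (w - s *\<^sub>R z)" by (rule psdB)
  also have "\<dots> = w \<bullet> B w - s * (w \<bullet> B z) - s * (z \<bullet> B w) + s * s * (z \<bullet> B z)"
    by (simp add: linear_diff[OF lB] linear_cmul[OF lB] inner_diff_left inner_diff_right algebra_simps)
  also have "\<dots> = w \<bullet> B w - 2 * s * (w \<bullet> w) + s * s * (z \<bullet> B z)"
    using wz zw by simp
  also have "\<dots> \<le> w \<bullet> B w - 2 * s * (w \<bullet> w) + s * s * (c * (w \<bullet> w))"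
    using zb by (intro add_left_mono mult_left_mono) auto
  also have "\<dots> = w \<bullet> B w - s * (w \<bullet> w)"
    unfolding s_def using c by (simp add: field_simps)
  finally show ?thesis unfolding s_def by simp
qed


lemma quad_bound:
  fixes h k :: "'a::real_inner" and gI gv a b :: real
  assumes "0 < gv" "gv < gI"
    and A: "gI * (h \<bullet> h) \<le> a" and B: "(1 / gv) * (k \<bullet> k) \<le> b"
  shows "min (gI - (gI + gv) / 2) (1 / gv - 1 / ((gI + gv) / 2)) * (h \<bullet> h + k \<bullet> k)
           \<le> a + h \<bullet> k + k \<bullet> h + b"
proof -
  define t where "t = (gI + gv) / 2"
  have t: "0 < t" "gv < t" "t < gI" using assms unfolding t_def by auto
  have "0 \<le> (t *\<^sub>R h + k) \<bullet> (t *\<^sub>R h + k)" by simp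
  also have "\<dots> = t * t * (h \<bullet> h) + 2 * t * (h \<bullet> k) + k \<bullet> k"
    by (simp add: inner_add_left inner_add_right inner_commute algebra_simps)
  finally have "0 \<le> (t * t * (h \<bullet> h) + 2 * t * (h \<bullet> k) + k \<bullet> k) / t"
    using t by simp
  also have "\<dots> = t * (h \<bullet> h) + 2 * (h \<bullet> k) + (1/t) * (k \<bullet> k)"
    using t by (simp add: field_simps)
  finally have hk: "- t * (h \<bullet> h) - (1/t) * (k \<bullet> k) \<le> 2 * (h \<bullet> k)"
    using t by (simp add: zero_le_mult_iff)
  define \<delta> where "\<delta> = min (gI - t) (1 / gv - 1 / t)"
  have "\<delta> * (h \<bullet> h + k \<bullet> k) = \<delta> * (h \<bullet> h) + \<delta> * (k \<bullet> k)" by (simp add: algebra_simps)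
  also have "\<dots> \<le> (gI - t) * (h \<bullet> h) + (1 / gv - 1 / t) * (k \<bullet> k)"
    unfolding \<delta>_def by (intro add_mono mult_right_mono) auto
  also have "\<dots> \<le> a + h \<bullet> k + k \<bullet> h + b"
    using A B hk by (simp add: inner_commute algebra_simps)
  finally show ?thesis unfolding \<delta>_def t_def .
qed


lemma grad_diff:
  fixes f g :: "'a::euclidean_space \<Rightarrow> real"
  assumes "f differentiable (at x)" "g differentiable (at x)"
  shows "grad (\<lambda>x. f x - g x) x = grad f x - grad g x"
  by (rule grad_eqI)
     (use has_derivative_diff[OF grad_has_derivative[OF assms(1)] grad_has_derivative[OF assms(2)]]
      in \<open>simp add: inner_diff_left\<close>)

theorem lemma3p2:
  fixes \<sigma>I \<sigma>E G :: "real^'n \<Rightarrow> real" and \<gamma>I \<gamma>v :: real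
  assumes "C2 \<sigma>I" and "C2 \<sigma>E"
    and "\<forall>\<Xi>. pos_def (hess (\<lambda>x. \<sigma>I x - \<sigma>E x) \<Xi>)"
    and "surj (grad (\<lambda>x. \<sigma>I x - \<sigma>E x))"
    and "C2 G"
    and "\<forall>\<tau>. grad G \<tau> = - inv (grad (\<lambda>x. \<sigma>I x - \<sigma>E x)) (- \<tau>)"
    and "0 < \<gamma>v" and "\<gamma>v < \<gamma>I"
    and "\<forall>\<Xi>. ge_scalar (hess \<sigma>I \<Xi>) \<gamma>I"
    and "\<forall>\<Xi>. le_scalar (hess (\<lambda>x. \<sigma>I x - \<sigma>E x) \<Xi>) \<gamma>v"
  shows "\<exists>\<delta>>0. \<forall>p :: (real^'n) \<times> (real^'n).
           ge_scalar (hess (\<lambda>z. \<sigma>I (fst z) + fst z \<bullet> snd z + G (snd z)) p) \<delta>"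
proof -
  define \<Sigma> where "\<Sigma> = (\<lambda>x. \<sigma>I x - \<sigma>E x)"
  define F where "F = grad \<Sigma>"
  have dI: "\<forall>x. \<sigma>I differentiable (at x)" "\<forall>x. grad \<sigma>I differentiable (at x)"
    using assms(1) unfolding C2_def by auto
  have dE: "\<forall>x. \<sigma>E differentiable (at x)" "\<forall>x. grad \<sigma>E differentiable (at x)"
    using assms(2) unfolding C2_def by auto
  have dG: "\<forall>x. G differentiable (at x)" "\<forall>x. grad G differentiable (at x)"
    using assms(5) unfolding C2_def by auto
  have Feq: "F = (\<lambda>x. grad \<sigma>I x - grad \<sigma>E x)"
    unfolding F_def \<Sigma>_def using grad_diff dI dE by blast
  have dF: "F differentiable (at x)" for x
    unfolding Feq using dI(2) dE(2) by (intro differentiable_diff) auto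
  have dF': "(F has_derivative hess \<Sigma> x) (at x)" for x
    using hess_has_derivative[of \<Sigma> x] dF unfolding F_def by simp
  have HB: "hess \<Sigma> (- grad G \<tau>) (hess G \<tau> k) = k" for \<tau> k
  proof -
    have FG: "F (- grad G t) = - t" for t
      using assms(6) assms(4) unfolding F_def \<Sigma>_def by (simp add: surj_f_inv_f)
    have d1: "((\<lambda>t. - grad G t) has_derivative (\<lambda>k. - hess G \<tau> k)) (at \<tau>)"
      using hess_has_derivative[of G \<tau>] dG by (auto intro: has_derivative_minus)
    have "((\<lambda>t. F (- grad G t)) has_derivative (\<lambda>k. hess \<Sigma> (- grad G \<tau>) (- hess G \<tau> k))) (at \<tau>)"
      by (rule has_derivative_compose[OF d1 dF'])
    then have a: "((\<lambda>t. - t) has_derivative (\<lambda>k. hess \<Sigma> (- grad G \<tau>) (- hess G \<tau> k))) (at \<tau>)"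
      using FG by simp
    have b: "((\<lambda>t. - t) has_derivative (\<lambda>k. - k)) (at \<tau>)"
      by (auto intro!: derivative_eq_intros)
    have "(\<lambda>k. hess \<Sigma> (- grad G \<tau>) (- hess G \<tau> k)) = (\<lambda>k. - k)"
      using has_derivative_unique[OF a b] .
    then have "hess \<Sigma> (- grad G \<tau>) (- hess G \<tau> k) = - k" by metis
    moreover have "linear (hess \<Sigma> (- grad G \<tau>))"
      using dF'[of "- grad G \<tau>"] has_derivative_linear by blast
    ultimately show ?thesis by (simp add: linear_neg)
  qed
  have Bbound: "(1 / \<gamma>v) * (k \<bullet> k) \<le> k \<bullet> hess G \<tau> k" for \<tau> k
  proof (rule inv_bound)
    show "linear (hess \<Sigma> (- grad G \<tau>))"
      using dF'[of "- grad G \<tau>"] has_derivative_linear by blast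
    show "linear (hess G \<tau>)" using hess_linear dG by blast
    show "hess G \<tau> x \<bullet> y = hess G \<tau> y \<bullet> x" for x y
      using hess_sym[OF assms(5)] by metis
    show "hess \<Sigma> (- grad G \<tau>) (hess G \<tau> k) = k" for k by (rule HB)
    show "0 \<le> v \<bullet> hess \<Sigma> (- grad G \<tau>) v" for v
      using assms(3) unfolding pos_def_def \<Sigma>_def
      by (cases "v = 0") (auto simp: less_imp_le)
    show "v \<bullet> hess \<Sigma> (- grad G \<tau>) v \<le> \<gamma>v * (v \<bullet> v)" for v
      using assms(10) unfolding le_scalar_def \<Sigma>_def by blast
    show "0 < \<gamma>v" by (rule assms(7))
  qed
  define P where "P = (\<lambda>z::(real^'n) \<times> (real^'n). \<sigma>I (fst z) + fst z \<bullet> snd z + G (snd z))"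
  have gP: "grad P z = (grad \<sigma>I (fst z) + snd z, fst z + grad G (snd z))" for z
  proof (rule grad_eqI)
    have a: "((\<lambda>z. \<sigma>I (fst z)) has_derivative (\<lambda>d. grad \<sigma>I (fst z) \<bullet> fst d)) (at z)"
      by (rule has_derivative_compose[OF has_derivative_fst[OF has_derivative_ident] grad_has_derivative])
         (use dI in auto)
    have b: "((\<lambda>z. G (snd z)) has_derivative (\<lambda>d. grad G (snd z) \<bullet> snd d)) (at z)"
      by (rule has_derivative_compose[OF has_derivative_snd[OF has_derivative_ident] grad_has_derivative])
         (use dG in auto)
    have c: "((\<lambda>z. fst z \<bullet> snd z) has_derivative (\<lambda>d. fst z \<bullet> snd d + fst d \<bullet> snd z)) (at z)"
      by (auto intro!: derivative_eq_intros)
    have "(P has_derivative (\<lambda>d. grad \<sigma>I (fst z) \<bullet> fst d + (fst z \<bullet> snd d + fst d \<bullet> snd z) + grad G (snd z) \<bullet> snd d)) (at z)"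
      unfolding P_def by (intro has_derivative_add a b c)
    moreover have "(\<lambda>d. grad \<sigma>I (fst z) \<bullet> fst d + (fst z \<bullet> snd d + fst d \<bullet> snd z) + grad G (snd z) \<bullet> snd d)
       = (\<lambda>d. (grad \<sigma>I (fst z) + snd z, fst z + grad G (snd z)) \<bullet> d)"
      by (auto simp: inner_add_left inner_commute algebra_simps inner_Pair_0 prod_eq_iff
          intro!: ext split: prod.splits)
    ultimately show "(P has_derivative (\<lambda>d. (grad \<sigma>I (fst z) + snd z, fst z + grad G (snd z)) \<bullet> d)) (at z)"
      by simp
  qed
  have hP: "hess P z = (\<lambda>d. (hess \<sigma>I (fst z) (fst d) + snd d, fst d + hess G (snd z) (snd d)))" for z
  proof -
    have e: "grad P = (\<lambda>z. (grad \<sigma>I (fst z) + snd z, fst z + grad G (snd z)))"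
      using gP by (intro ext) simp
    have a: "((\<lambda>z. grad \<sigma>I (fst z)) has_derivative (\<lambda>d. hess \<sigma>I (fst z) (fst d))) (at z)"
      by (rule has_derivative_compose[OF has_derivative_fst[OF has_derivative_ident] hess_has_derivative])
         (use dI in auto)
    have b: "((\<lambda>z. grad G (snd z)) has_derivative (\<lambda>d. hess G (snd z) (snd d))) (at z)"
      by (rule has_derivative_compose[OF has_derivative_snd[OF has_derivative_ident] hess_has_derivative])
         (use dG in auto)
    have "(grad P has_derivative (\<lambda>d. (hess \<sigma>I (fst z) (fst d) + snd d, fst d + hess G (snd z) (snd d)))) (at z)"
      unfolding e
      by (intro has_derivative_Pair has_derivative_add a b has_derivative_fst[OF has_derivative_ident]
          has_derivative_snd[OF has_derivative_ident])
    then show ?thesis unfolding hess_def by (rule frechet_derivative_at[symmetric])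
  qed
  define \<delta> where "\<delta> = min (\<gamma>I - (\<gamma>I + \<gamma>v) / 2) (1 / \<gamma>v - 1 / ((\<gamma>I + \<gamma>v) / 2))"
  have "1 / ((\<gamma>I + \<gamma>v) / 2) < 1 / \<gamma>v"
    using assms(7,8) by (intro divide_strict_left_mono) auto
  then have \<delta>: "\<delta> > 0" unfolding \<delta>_def using assms(7,8) by auto
  have "ge_scalar (hess P p) \<delta>" for p
    unfolding ge_scalar_def
  proof
    fix d :: "(real^'n) \<times> (real^'n)"
    obtain h k where d: "d = (h, k)" by fastforce
    have A: "\<gamma>I * (h \<bullet> h) \<le> h \<bullet> hess \<sigma>I (fst p) h"
      using assms(9) unfolding ge_scalar_def by blast
    have "\<delta> * (h \<bullet> h + k \<bullet> k) \<le> h \<bullet> hess \<sigma>I (fst p) h + h \<bullet> k + k \<bullet> h + k \<bullet> hess G (snd p) k"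
      unfolding \<delta>_def by (rule quad_bound[OF assms(7,8) A Bbound])
    then show "\<delta> * (d \<bullet> d) \<le> d \<bullet> hess P p d"
      unfolding d hP by (simp add: inner_add_right algebra_simps)
  qed
  then show ?thesis using \<delta> unfolding P_def by blast
qed

end
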